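(* Let $\{w^k\}$ be generated by the L-GADMM iteration and $\{\bar w^k\}$ be the auxiliary sequence. Then for every $k\ge0$, $$(\bar w^k-\bar w^{k+1})^\top Q\big\{(w^k-w^{k+1})-(\bar w^k-\bar w^{k+1})\big\}\ge0.$$
   Context: Standing setting. Let $m\ge 2$, $\ell$, $n_1,\dots,n_m$ be positive integers. For $i=1,\dots,m$ let $\theta_i:\mathbb{R}^{n_i}\to\mathbb{R}$ be convex, $\mathcal{X}_i\subseteq\mathbb{R}^{n_i}$ nonempty closed convex, $A_i\in\mathbb{R}^{\ell\times n_i}$ of full column rank, and $b\in\mathbb{R}^\ell$. Problem (P): $\min\{\sum_{i=1}^m\theta_i(x_i):\sum_{i=1}^mA_ix_i=b,\ x_i\in\mathcal{X}_i\}$, assumed to have a nonempty solution set. Write $u=(x_1,\dots,x_m)$, $w=(x_1,\dots,x_m,y)$ with $y\in\mathbb{R}^\ell$, $\theta(u)=\sum_i\theta_i(x_i)$, $F(w)=(-A_1^\top y,\dots,-A_m^\top y,\ \sum_iA_ix_i-b)$, $\mathcal{W}=\mathcal{X}_1\times\cdots\times\mathcal{X}_m\times\mathbb{R}^\ell$, and $\mathcal{W}^*=\{w^*\in\mathcal{W}:\theta(u)-\theta(u^* )+(w-w^* )^\top F(w^* )\ge0\ \forall w\in\mathcal{W}\}$ (nonempty). For symmetric $G$, $\|v\|_G^2:=v^\top Gv$; $\|\cdot\|$ is the Euclidean norm. Vectors are partitioned as $w=(R,x_m,y)$ with $R=(x_1,\dots,x_{m-1})$. Parameters: $\rho>0$,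 $\gamma\in(0,2)$, symmetric positive definite $P_i\in\mathbb{R}^{n_i\times n_i}$ ($i=1,\dots,m$) such that $G_1\succ0$, where $G_1$ is the symmetric block matrix with diagonal blocks $P_1,\dots,P_{m-1}$ and $(i,j)$ block $-\rho A_i^\top A_j$ for $i\ne j$, $1\le i,j\le m-1$. Matrices (w.r.t. the partition $(R,x_m,y)$): $Q=\begin{pmatrix}G_1&0&0\\0&\rho A_m^\top A_m+P_m&(1-\gamma)A_m^\top\\0&-A_m&\frac1\rho I_\ell\end{pmatrix}$, $M=\begin{pmatrix}I&0&0\\0&I_{n_m}&0\\0&-\rho A_m&\gamma I_\ell\end{pmatrix}$, $H=\begin{pmatrix}G_1&0&0\\0&P_m+\frac\rho\gamma A_m^\top A_m&\frac{1-\gamma}\gamma A_m^\top\\0&\frac{1-\gamma}\gamma A_m&\frac1{\gamma\rho}I_\ell\end{pmatrix}$, $N=Q^\top+Q-M^\top HM$. L-GADMM iteration: from an arbitrary $w^0=(x_1^0,\dots,x_m^0,y^0)\in\mathcal{W}$, for $k=0,1,2,\dots$: $x_j^{k+1}=\arg\min_{x_j\in\mathcal{X}_j}\{\theta_j(x_j)+\frac\rho2\|A_jx_j+\sum_{i=1,i\ne j}^mA_ix_i^k-b-\frac{y^k}\rho\|^2+\frac12\|x_j-x_j^k\|_{P_j}^2\}$ for $j=1,\dots,m-1$; $x_m^{k+1}=\arg\min_{x_m\in\mathcal{X}_m}\{\theta_m(x_m)+\frac\rho2\|\gamma\sum_{i=1}^{m-1}A_ix_i^{k+1}+(1-\gamma)(b-A_mx_m^k)+A_mx_m-b-\frac{y^k}\rho\|^2+\frac12\|x_m-x_m^k\|_{P_m}^2\}$;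 $y^{k+1}=y^k-\rho\big(\gamma\sum_{i=1}^{m-1}A_ix_i^{k+1}+(1-\gamma)(b-A_mx_m^k)+A_mx_m^{k+1}-b\big)$. Auxiliary sequence: $\bar w^k=(\bar x_1^k,\dots,\bar x_m^k,\bar y^k)$ with $\bar x_i^k=x_i^{k+1}$ ($i=1,\dots,m$) and $\bar y^k=y^k-\rho(\sum_{i=1}^{m-1}A_ix_i^{k+1}+A_mx_m^k-b)$; $\bar u^k=(\bar x_1^k,\dots,\bar x_m^k)$, $R^k=(x_1^k,\dots,x_{m-1}^k)$, $\bar R^k=(\bar x_1^k,\dots,\bar x_{m-1}^k)$. *)

theory Defs
  imports Complex_Main "Jordan_Normal_Form.DL_Rank"
begin

text \<open>A block vector w = (x_1,...,x_m,y) is represented by a pair (xs, y) with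
  xs :: nat => real vec (blocks indexed 1..m) and y :: real vec.\<close>

definition vsum :: "nat \<Rightarrow> (nat \<Rightarrow> real vec) \<Rightarrow> nat set \<Rightarrow> real vec" where
  "vsum d f I = vec d (\<lambda>r. \<Sum>i\<in>I. f i $ r)"

definition sqn :: "real vec \<Rightarrow> real" where
  "sqn v = v \<bullet> v"

definition convex_vset :: "nat \<Rightarrow> real vec set \<Rightarrow> bool" where
  "convex_vset d S \<longleftrightarrow> S \<subseteq> carrier_vec d \<and>
     (\<forall>u\<in>S. \<forall>v\<in>S. \<forall>t::real. 0 \<le> t \<and> t \<le> 1 \<longrightarrow> t \<cdot>\<^sub>v u + (1 - t) \<cdot>\<^sub>v v \<in> S)"

definition closed_vset :: "nat \<Rightarrow> real vec set \<Rightarrow> bool" where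
  "closed_vset d S \<longleftrightarrow> S \<subseteq> carrier_vec d \<and>
     (\<forall>s L. (\<forall>k. s k \<in> S) \<and> L \<in> carrier_vec d \<and> (\<forall>r<d. (\<lambda>k. s k $ r) \<longlonglongrightarrow> L $ r)
        \<longrightarrow> L \<in> S)"

definition convex_vfun :: "nat \<Rightarrow> (real vec \<Rightarrow> real) \<Rightarrow> bool" where
  "convex_vfun d f \<longleftrightarrow> (\<forall>u\<in>carrier_vec d. \<forall>v\<in>carrier_vec d. \<forall>t::real. 0 \<le> t \<and> t \<le> 1 \<longrightarrow>
      f (t \<cdot>\<^sub>v u + (1 - t) \<cdot>\<^sub>v v) \<le> t * f u + (1 - t) * f v)"

definition sym_pd :: "nat \<Rightarrow> real mat \<Rightarrow> bool" where
  "sym_pd d P \<longleftrightarrow> P \<in> carrier_mat d d \<and> P\<^sup>T = P \<and>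
     (\<forall>q\<in>carrier_vec d. q \<noteq> 0\<^sub>v d \<longrightarrow> q \<bullet> (P *\<^sub>v q) > 0)"

definition full_col_rank :: "nat \<Rightarrow> nat \<Rightarrow> real mat \<Rightarrow> bool" where
  "full_col_rank l d A \<longleftrightarrow> A \<in> carrier_mat l d \<and> vec_space.rank l A = d"

text \<open>Bilinear form a^T G_1 b of the block matrix G_1 (diagonal blocks P_1..P_(m-1),
  off-diagonal (i,j) blocks -rho A_i^T A_j), written out blockwise.\<close>
definition G1form :: "nat \<Rightarrow> (nat \<Rightarrow> real mat) \<Rightarrow> (nat \<Rightarrow> real mat) \<Rightarrow> real
    \<Rightarrow> (nat \<Rightarrow> real vec) \<Rightarrow> (nat \<Rightarrow> real vec) \<Rightarrow> real" where
  "G1form m A P \<rho> a b =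
     (\<Sum>i\<in>{1..m-1}. a i \<bullet> (P i *\<^sub>v b i))
     - \<rho> * (\<Sum>i\<in>{1..m-1}. \<Sum>j\<in>{1..m-1}. if i = j then 0 else (A i *\<^sub>v a i) \<bullet> (A j *\<^sub>v b j))"

definition G1_pd :: "nat \<Rightarrow> (nat \<Rightarrow> nat) \<Rightarrow> (nat \<Rightarrow> real mat) \<Rightarrow> (nat \<Rightarrow> real mat) \<Rightarrow> real \<Rightarrow> bool" where
  "G1_pd m n A P \<rho> \<longleftrightarrow>
     (\<forall>R. (\<forall>i\<in>{1..m-1}. R i \<in> carrier_vec (n i)) \<and> (\<exists>i\<in>{1..m-1}. R i \<noteq> 0\<^sub>v (n i))
        \<longrightarrow> G1form m A P \<rho> R R > 0)"

text \<open>Bilinear form a^T Q b for the (non-symmetric) block matrix Q w.r.t. the partition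
  (R, x_m, y), written out blockwise.\<close>
definition Qform :: "nat \<Rightarrow> (nat \<Rightarrow> real mat) \<Rightarrow> (nat \<Rightarrow> real mat) \<Rightarrow> real \<Rightarrow> real
    \<Rightarrow> (nat \<Rightarrow> real vec) \<times> real vec \<Rightarrow> (nat \<Rightarrow> real vec) \<times> real vec \<Rightarrow> real" where
  "Qform m A P \<rho> \<gamma> a b =
     (let ax = fst a; ay = snd a; bx = fst b; by = snd b in
       G1form m A P \<rho> ax bx
       + \<rho> * ((A m *\<^sub>v ax m) \<bullet> (A m *\<^sub>v bx m)) + ax m \<bullet> (P m *\<^sub>v bx m)
       + (1 - \<gamma>) * ((A m *\<^sub>v ax m) \<bullet> by)
       - ay \<bullet> (A m *\<^sub>v bx m)
       + (1 / \<rho>) * (ay \<bullet> by))"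

definition wminus :: "(nat \<Rightarrow> real vec) \<times> real vec \<Rightarrow> (nat \<Rightarrow> real vec) \<times> real vec
    \<Rightarrow> (nat \<Rightarrow> real vec) \<times> real vec" where
  "wminus a b = ((\<lambda>i. fst a i - fst b i), snd a - snd b)"

definition feasibleP :: "nat \<Rightarrow> nat \<Rightarrow> (nat \<Rightarrow> real vec set) \<Rightarrow> (nat \<Rightarrow> real mat) \<Rightarrow> real vec
    \<Rightarrow> (nat \<Rightarrow> real vec) \<Rightarrow> bool" where
  "feasibleP m l X A b u \<longleftrightarrow> (\<forall>i\<in>{1..m}. u i \<in> X i) \<and> vsum l (\<lambda>i. A i *\<^sub>v u i) {1..m} = b"

definition solvableP :: "nat \<Rightarrow> nat \<Rightarrow> (nat \<Rightarrow> real vec \<Rightarrow> real) \<Rightarrow> (nat \<Rightarrow> real vec set)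
    \<Rightarrow> (nat \<Rightarrow> real mat) \<Rightarrow> real vec \<Rightarrow> bool" where
  "solvableP m l \<theta> X A b \<longleftrightarrow> (\<exists>u. feasibleP m l X A b u \<and>
      (\<forall>v. feasibleP m l X A b v \<longrightarrow> (\<Sum>i\<in>{1..m}. \<theta> i (u i)) \<le> (\<Sum>i\<in>{1..m}. \<theta> i (v i))))"

definition inW :: "nat \<Rightarrow> nat \<Rightarrow> (nat \<Rightarrow> real vec set) \<Rightarrow> (nat \<Rightarrow> real vec) \<times> real vec \<Rightarrow> bool" where
  "inW m l X w \<longleftrightarrow> (\<forall>i\<in>{1..m}. fst w i \<in> X i) \<and> snd w \<in> carrier_vec l"

text \<open>Membership in W*: theta(u) - theta(u*) + (w - w*)^T F(w*) >= 0 for all w in W,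
  with F(w) = (-A_1^T y, ..., -A_m^T y, sum_i A_i x_i - b).\<close>
definition inWstar :: "nat \<Rightarrow> nat \<Rightarrow> (nat \<Rightarrow> real vec \<Rightarrow> real) \<Rightarrow> (nat \<Rightarrow> real vec set)
    \<Rightarrow> (nat \<Rightarrow> real mat) \<Rightarrow> real vec \<Rightarrow> (nat \<Rightarrow> real vec) \<times> real vec \<Rightarrow> bool" where
  "inWstar m l \<theta> X A b ws \<longleftrightarrow> inW m l X ws \<and>
     (\<forall>w. inW m l X w \<longrightarrow>
        (\<Sum>i\<in>{1..m}. \<theta> i (fst w i)) - (\<Sum>i\<in>{1..m}. \<theta> i (fst ws i))
        + (\<Sum>i\<in>{1..m}. (fst w i - fst ws i) \<bullet> (- ((A i)\<^sup>T *\<^sub>v snd ws)))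
        + (snd w - snd ws) \<bullet> (vsum l (\<lambda>i. A i *\<^sub>v fst ws i) {1..m} - b) \<ge> 0)"

end

theory Submission imports Defs begin

lemma real_lemma:
  fixes a c :: real
  assumes h: "\<And>t. 0 < t \<Longrightarrow> t \<le> 1 \<Longrightarrow> 0 \<le> t * a + t^2 * c" and c: "c \<ge> 0"
  shows "a \<ge> 0"
proof (rule ccontr)
  assume "\<not> a \<ge> 0" hence a: "a < 0" by simp
  define t where "t = min 1 (-a/(2*c+1))"
  have "0 < -a/(2*c+1)" using a c by (intro divide_pos_pos) auto
  hence t0: "0 < t" by (simp add: t_def)
  have t1: "t \<le> 1" by (simp add: t_def)
  have "t * c \<le> (-a/(2*c+1)) * c" using c by (intro mult_right_mono) (auto simp: t_def)
  also have "\<dots> < -a"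
  proof -
    have "(-a/(2*c+1)) * c = (-a) * (c/(2*c+1))" by simp
    also have "\<dots> < (-a) * 1" using a c by (intro mult_strict_left_mono) (auto simp: field_simps)
    finally show ?thesis by simp
  qed
  finally have "a + t*c < 0" by simp
  hence "t * (a + t*c) < 0" using t0 by (simp add: mult_pos_neg)
  moreover have "t * (a + t*c) = t*a + t^2*c" by (simp add: algebra_simps power2_eq_square)
  ultimately show False using h[OF t0 t1] by simp
qed

lemma sqn_expand:
  assumes "w \<in> carrier_vec l" "e \<in> carrier_vec l"
  shows "sqn (w + t \<cdot>\<^sub>v e) = sqn w + 2*t*(w \<bullet> e) + t^2 * sqn e"
  using assms unfolding sqn_def
  by (simp add: scalar_prod_add_distrib[of _ l] add_scalar_prod_distrib[of _ l]
      comm_scalar_prod[of e l w] power2_eq_square algebra_simps)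

lemma sym_swap:
  fixes P :: "real mat"
  assumes "P \<in> carrier_mat d d" "P\<^sup>T = P" "u \<in> carrier_vec d" "w \<in> carrier_vec d"
  shows "u \<bullet> (P *\<^sub>v w) = w \<bullet> (P *\<^sub>v u)"
proof -
  have "u \<bullet> (P *\<^sub>v w) = (P\<^sup>T *\<^sub>v u) \<bullet> w"
    using transpose_vec_mult_scalar[OF assms(1) assms(4) assms(3)] by simp
  also have "\<dots> = w \<bullet> (P *\<^sub>v u)" using assms by (simp add: comm_scalar_prod[of _ d])
  finally show ?thesis .
qed

lemma quad_expand:
  fixes P :: "real mat"
  assumes P: "P \<in> carrier_mat d d" "P\<^sup>T = P" and w: "w \<in> carrier_vec d" and e: "e \<in> carrier_vec d"
  shows "(w + t \<cdot>\<^sub>v e) \<bullet> (P *\<^sub>v (w + t \<cdot>\<^sub>v e)) = w \<bullet> (P *\<^sub>v w) + 2*t*(e \<bullet> (P *\<^sub>v w)) + t^2 * (e \<bullet> (P *\<^sub>v e))"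
proof -
  have s: "w \<bullet> (P *\<^sub>v e) = e \<bullet> (P *\<^sub>v w)" using sym_swap[OF P w e] .
  show ?thesis using P w e s
    by (simp add: mult_add_distrib_mat_vec[of _ d d] mult_mat_vec[of _ d d]
      scalar_prod_add_distrib[of _ d] add_scalar_prod_distrib[of _ d] power2_eq_square algebra_simps)
qed

lemma foc:
  fixes \<theta> :: "real vec \<Rightarrow> real" and P A :: "real mat"
  assumes conv: "convex_vfun d \<theta>" and S: "convex_vset d S" and v: "v \<in> S" and z: "z \<in> S"
    and A: "A \<in> carrier_mat l d" and c: "c \<in> carrier_vec l" and p: "p \<in> carrier_vec d"
    and P: "sym_pd d P" and rho: "\<rho> > 0"
    and min: "\<And>z. z \<in> S \<Longrightarrow> \<theta> v + \<rho>/2 * sqn (A *\<^sub>v v + c) + 1/2 * ((v - p) \<bullet> (P *\<^sub>v (v - p)))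
        \<le> \<theta> z + \<rho>/2 * sqn (A *\<^sub>v z + c) + 1/2 * ((z - p) \<bullet> (P *\<^sub>v (z - p)))"
  shows "0 \<le> \<theta> z - \<theta> v + \<rho> * ((A *\<^sub>v z - A *\<^sub>v v) \<bullet> (A *\<^sub>v v + c)) + (z - v) \<bullet> (P *\<^sub>v (v - p))"
proof -
  have Sc: "S \<subseteq> carrier_vec d" using S by (simp add: convex_vset_def)
  have vc: "v \<in> carrier_vec d" and zc: "z \<in> carrier_vec d" using Sc v z by auto
  have Pc: "P \<in> carrier_mat d d" and Ps: "P\<^sup>T = P" and Ppd: "\<And>q. q \<in> carrier_vec d \<Longrightarrow> q \<noteq> 0\<^sub>v d \<Longrightarrow> q \<bullet> (P *\<^sub>v q) > 0"
    using P by (auto simp: sym_pd_def)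
  define e1 where "e1 = A *\<^sub>v z - A *\<^sub>v v"
  define w1 where "w1 = A *\<^sub>v v + c"
  define e2 where "e2 = z - v"
  define w2 where "w2 = v - p"
  have e1c: "e1 \<in> carrier_vec l" and w1c: "w1 \<in> carrier_vec l" using A vc zc c by (auto simp: e1_def w1_def)
  have e2c: "e2 \<in> carrier_vec d" and w2c: "w2 \<in> carrier_vec d" using vc zc p by (auto simp: e2_def w2_def)
  have Cnn: "e2 \<bullet> (P *\<^sub>v e2) \<ge> 0"
  proof (cases "e2 = 0\<^sub>v d")
    case True thus ?thesis using Pc by simp
  next
    case False thus ?thesis using Ppd[OF e2c] by fastforce
  qed
  have se: "sqn e1 \<ge> 0" unfolding sqn_def scalar_prod_def
    by (intro sum_nonneg) auto
  define a where "a = \<theta> z - \<theta> v + \<rho> * (e1 \<bullet> w1) + e2 \<bullet> (P *\<^sub>v w2)"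
  define C where "C = \<rho>/2 * sqn e1 + 1/2 * (e2 \<bullet> (P *\<^sub>v e2))"
  have "a \<ge> 0"
  proof (rule real_lemma[of a C])
    show "C \<ge> 0" using Cnn se rho by (simp add: C_def)
  next
    fix t :: real assume t0: "0 < t" and t1: "t \<le> 1"
    define q where "q = t \<cdot>\<^sub>v z + (1 - t) \<cdot>\<^sub>v v"
    have qS: "q \<in> S" using S v z t0 t1 unfolding convex_vset_def q_def by auto
    have th: "\<theta> q \<le> t * \<theta> z + (1 - t) * \<theta> v"
      using conv vc zc t0 t1 unfolding convex_vfun_def q_def by auto
    have qc: "q \<in> carrier_vec d" using vc zc by (simp add: q_def)
    have Aq: "A *\<^sub>v q = t \<cdot>\<^sub>v (A *\<^sub>v z) + (1 - t) \<cdot>\<^sub>v (A *\<^sub>v v)"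
      using A vc zc by (simp add: q_def mult_add_distrib_mat_vec[of _ l d] mult_mat_vec[of _ l d])
    have eq1: "A *\<^sub>v q + c = w1 + t \<cdot>\<^sub>v e1"
      unfolding Aq w1_def e1_def using A vc zc c
      by (intro eq_vecI) (auto simp: algebra_simps)
    have eq2: "q - p = w2 + t \<cdot>\<^sub>v e2"
      unfolding q_def w2_def e2_def using vc zc p
      by (intro eq_vecI) (auto simp: algebra_simps)
    have "\<theta> v + \<rho>/2 * sqn w1 + 1/2 * (w2 \<bullet> (P *\<^sub>v w2))
        \<le> \<theta> q + \<rho>/2 * sqn (w1 + t \<cdot>\<^sub>v e1) + 1/2 * ((w2 + t \<cdot>\<^sub>v e2) \<bullet> (P *\<^sub>v (w2 + t \<cdot>\<^sub>v e2)))"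
      using min[OF qS] unfolding eq1 eq2 w1_def w2_def by simp
    also have "\<dots> = \<theta> q + \<rho>/2 * (sqn w1 + 2*t*(w1 \<bullet> e1) + t^2 * sqn e1)
        + 1/2 * (w2 \<bullet> (P *\<^sub>v w2) + 2*t*(e2 \<bullet> (P *\<^sub>v w2)) + t^2 * (e2 \<bullet> (P *\<^sub>v e2)))"
      by (simp add: sqn_expand[OF w1c e1c] quad_expand[OF Pc Ps w2c e2c])
    finally have ineq: "\<theta> v + \<rho>/2 * sqn w1 + 1/2 * (w2 \<bullet> (P *\<^sub>v w2))
        \<le> \<theta> q + \<rho>/2 * (sqn w1 + 2*t*(w1 \<bullet> e1) + t^2 * sqn e1)
        + 1/2 * (w2 \<bullet> (P *\<^sub>v w2) + 2*t*(e2 \<bullet> (P *\<^sub>v w2)) + t^2 * (e2 \<bullet> (P *\<^sub>v e2)))" .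
    have cm: "w1 \<bullet> e1 = e1 \<bullet> w1" using comm_scalar_prod[OF w1c e1c] .
    show "0 \<le> t * a + t^2 * C"
      using ineq th cm unfolding a_def C_def by (simp add: algebra_simps)
  qed
  thus ?thesis by (simp add: a_def e1_def w1_def e2_def w2_def)
qed

lemma combine:
  fixes A P :: "real mat"
  assumes A: "A \<in> carrier_mat l d" and P: "P \<in> carrier_mat d d"
    and x0: "x0 \<in> carrier_vec d" and x1: "x1 \<in> carrier_vec d" and x2: "x2 \<in> carrier_vec d"
    and c0: "c0 \<in> carrier_vec l" and c1: "c1 \<in> carrier_vec l"
    and h1: "0 \<le> T2 - T1 + \<rho> * ((A *\<^sub>v x2 - A *\<^sub>v x1) \<bullet> (A *\<^sub>v x1 + c0)) + (x2 - x1) \<bullet> (P *\<^sub>v (x1 - x0))"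
    and h2: "0 \<le> T1 - T2 + \<rho> * ((A *\<^sub>v x1 - A *\<^sub>v x2) \<bullet> (A *\<^sub>v x2 + c1)) + (x1 - x2) \<bullet> (P *\<^sub>v (x2 - x1))"
  shows "0 \<le> \<rho> * ((A *\<^sub>v (x1 - x2)) \<bullet> ((A *\<^sub>v x2 + c1) - (A *\<^sub>v x1 + c0))) + (x1 - x2) \<bullet> (P *\<^sub>v ((x0 - x1) - (x1 - x2)))"
proof -
  have Ac: "A *\<^sub>v x0 \<in> carrier_vec l" "A *\<^sub>v x1 \<in> carrier_vec l" "A *\<^sub>v x2 \<in> carrier_vec l" using A x0 x1 x2 by auto
  have Pc: "P *\<^sub>v x0 \<in> carrier_vec d" "P *\<^sub>v x1 \<in> carrier_vec d" "P *\<^sub>v x2 \<in> carrier_vec d" using P x0 x1 x2 by auto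
  note d1 = mult_minus_distrib_mat_vec[OF A] mult_minus_distrib_mat_vec[OF P]
  note d2 = scalar_prod_add_distrib[of _ l] scalar_prod_minus_distrib[of _ l] add_scalar_prod_distrib[of _ l] minus_scalar_prod_distrib[of _ l]
  note d3 = scalar_prod_minus_distrib[of _ d] minus_scalar_prod_distrib[of _ d]
  have e1: "(A *\<^sub>v x2 - A *\<^sub>v x1) \<bullet> (A *\<^sub>v x1 + c0) = (A *\<^sub>v x2) \<bullet> (A *\<^sub>v x1) + (A *\<^sub>v x2) \<bullet> c0 - (A *\<^sub>v x1) \<bullet> (A *\<^sub>v x1) - (A *\<^sub>v x1) \<bullet> c0"
    using Ac c0 by (simp add: d2)
  have e2: "(A *\<^sub>v x1 - A *\<^sub>v x2) \<bullet> (A *\<^sub>v x2 + c1) = (A *\<^sub>v x1) \<bullet> (A *\<^sub>v x2) + (A *\<^sub>v x1) \<bullet> c1 - (A *\<^sub>v x2) \<bullet> (A *\<^sub>v x2) - (A *\<^sub>v x2) \<bullet> c1"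
    using Ac c1 by (simp add: d2)
  have e3: "(A *\<^sub>v (x1 - x2)) \<bullet> ((A *\<^sub>v x2 + c1) - (A *\<^sub>v x1 + c0)) =
     (A *\<^sub>v x1) \<bullet> (A *\<^sub>v x2) + (A *\<^sub>v x1) \<bullet> c1 - (A *\<^sub>v x1) \<bullet> (A *\<^sub>v x1) - (A *\<^sub>v x1) \<bullet> c0
     - ((A *\<^sub>v x2) \<bullet> (A *\<^sub>v x2) + (A *\<^sub>v x2) \<bullet> c1 - (A *\<^sub>v x2) \<bullet> (A *\<^sub>v x1) - (A *\<^sub>v x2) \<bullet> c0)"
    using Ac c0 c1 x1 x2 by (simp add: d1 d2)
  have cm: "(A *\<^sub>v x2) \<bullet> (A *\<^sub>v x1) = (A *\<^sub>v x1) \<bullet> (A *\<^sub>v x2)" using Ac by (simp add: comm_scalar_prod[of _ l])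
  have f1: "(x2 - x1) \<bullet> (P *\<^sub>v (x1 - x0)) = x2 \<bullet> (P *\<^sub>v x1) - x2 \<bullet> (P *\<^sub>v x0) - x1 \<bullet> (P *\<^sub>v x1) + x1 \<bullet> (P *\<^sub>v x0)"
    using Pc x0 x1 x2 by (simp add: d1 d3)
  have f2: "(x1 - x2) \<bullet> (P *\<^sub>v (x2 - x1)) = x1 \<bullet> (P *\<^sub>v x2) - x1 \<bullet> (P *\<^sub>v x1) - x2 \<bullet> (P *\<^sub>v x2) + x2 \<bullet> (P *\<^sub>v x1)"
    using Pc x0 x1 x2 by (simp add: d1 d3)
  have f3: "(x1 - x2) \<bullet> (P *\<^sub>v ((x0 - x1) - (x1 - x2))) =
     x1 \<bullet> (P *\<^sub>v x0) - x1 \<bullet> (P *\<^sub>v x1) - (x1 \<bullet> (P *\<^sub>v x1) - x1 \<bullet> (P *\<^sub>v x2))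
     - (x2 \<bullet> (P *\<^sub>v x0) - x2 \<bullet> (P *\<^sub>v x1) - (x2 \<bullet> (P *\<^sub>v x1) - x2 \<bullet> (P *\<^sub>v x2)))"
    using Pc x0 x1 x2 by (simp add: d1 d3)
  show ?thesis using h1 h2 unfolding e1 e2 e3 f1 f2 f3 cm by (simp add: algebra_simps)
qed

lemma vsum_carrier[simp]: "vsum l f I \<in> carrier_vec l"
  by (simp add: vsum_def)

lemma vsum_index[simp]: "r < l \<Longrightarrow> vsum l f I $ r = (\<Sum>i\<in>I. f i $ r)"
  by (simp add: vsum_def)

lemma vsum_dim[simp]: "dim_vec (vsum l f I) = l"
  by (simp add: vsum_def)

lemma vsum_cong: "(\<And>i. i \<in> I \<Longrightarrow> f i = g i) \<Longrightarrow> vsum l f I = vsum l g I"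
  unfolding vsum_def by (intro eq_vecI) auto

lemma scalar_vsum:
  assumes u: "u \<in> carrier_vec l" and f: "\<And>i. i \<in> I \<Longrightarrow> f i \<in> carrier_vec l"
  shows "u \<bullet> vsum l f I = (\<Sum>i\<in>I. u \<bullet> f i)"
proof -
  have "u \<bullet> vsum l f I = (\<Sum>r<l. u $ r * (\<Sum>i\<in>I. f i $ r))"
    using u unfolding scalar_prod_def by (simp add: lessThan_atLeast0)
  also have "\<dots> = (\<Sum>i\<in>I. \<Sum>r<l. u $ r * f i $ r)"
    by (simp add: sum_distrib_left sum.swap[of _ I])
  also have "\<dots> = (\<Sum>i\<in>I. u \<bullet> f i)"
  proof (intro sum.cong refl)
    fix i assume "i \<in> I"
    hence "dim_vec (f i) = l" using f by auto
    thus "(\<Sum>r<l. u $ r * f i $ r) = u \<bullet> f i" by (simp add: scalar_prod_def lessThan_atLeast0)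
  qed
  finally show ?thesis .
qed

lemma reassoc:
  assumes "a \<in> carrier_vec l" "V \<in> carrier_vec l" "b \<in> carrier_vec l" "s \<in> carrier_vec l"
  shows "a + V - b - s = a + (V - b - (s::real vec))"
  using assms by (intro eq_vecI) auto

lemma reassoc2:
  assumes "a \<in> carrier_vec l" "V \<in> carrier_vec l" "b \<in> carrier_vec l" "s \<in> carrier_vec l"
  shows "V + a - b - s = a + (V - b - (s::real vec))"
  using assms by (intro eq_vecI) auto

lemma split1:
  assumes "j \<in> {1..m-1}" "(m::nat) \<ge> 2"
  shows "(\<Sum>i\<in>{1..m}-{j}. f i) = (\<Sum>i\<in>{1..m-1}-{j}. f i) + (f m :: real)"
proof -
  have "{1..m}-{j} = insert m ({1..m-1}-{j})" using assms by auto
  moreover have "m \<notin> {1..m-1}-{j}" using assms by auto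
  ultimately show ?thesis by (simp add: add.commute)
qed

lemma split2:
  assumes "j \<in> {1..(m::nat)-1}"
  shows "(\<Sum>i\<in>{1..m-1}. f i) = f j + (\<Sum>i\<in>{1..m-1}-{j}. (f i :: real))"
  using assms by (subst sum.remove[of _ j]) auto

lemma sum_if_diff:
  assumes "finite I"
  shows "(\<Sum>x\<in>I. if i = x then 0 else h x) = (\<Sum>x\<in>I-{i}. (h x :: real))"
  using assms by (simp add: sum.If_cases Diff_eq Int_commute)

theorem lemma4p2:
  fixes m l :: nat and n :: "nat \<Rightarrow> nat"
    and \<theta> :: "nat \<Rightarrow> real vec \<Rightarrow> real" and X :: "nat \<Rightarrow> real vec set"
    and A P :: "nat \<Rightarrow> real mat" and b :: "real vec"
    and \<rho> \<gamma> :: real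
    and x :: "nat \<Rightarrow> nat \<Rightarrow> real vec" and y :: "nat \<Rightarrow> real vec"
    and ybar :: "nat \<Rightarrow> real vec"
  assumes m2: "m \<ge> 2" and lpos: "l > 0" and npos: "\<forall>i\<in>{1..m}. n i > 0"
    and conv_theta: "\<forall>i\<in>{1..m}. convex_vfun (n i) (\<theta> i)"
    and X_ne: "\<forall>i\<in>{1..m}. X i \<noteq> {}"
    and X_closed: "\<forall>i\<in>{1..m}. closed_vset (n i) (X i)"
    and X_convex: "\<forall>i\<in>{1..m}. convex_vset (n i) (X i)"
    and A_rank: "\<forall>i\<in>{1..m}. full_col_rank l (n i) (A i)"
    and b_dim: "b \<in> carrier_vec l"
    and P_solvable: "solvableP m l \<theta> X A b"
    and Wstar_ne: "\<exists>ws. inWstar m l \<theta> X A b ws"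
    and rho_pos: "\<rho> > 0" and gamma_pos: "0 < \<gamma>" and gamma_lt2: "\<gamma> < 2"
    and P_pd: "\<forall>i\<in>{1..m}. sym_pd (n i) (P i)"
    and G1pd: "G1_pd m n A P \<rho>"
    and init: "inW m l X (x 0, y 0)"
    and step_j_mem: "\<And>k j. j \<in> {1..m-1} \<Longrightarrow> x (Suc k) j \<in> X j"
    and step_j_min: "\<And>k j z. j \<in> {1..m-1} \<Longrightarrow> z \<in> X j \<Longrightarrow>
        \<theta> j (x (Suc k) j)
          + \<rho> / 2 * sqn (A j *\<^sub>v x (Suc k) j + vsum l (\<lambda>i. A i *\<^sub>v x k i) ({1..m} - {j})
                         - b - (1 / \<rho>) \<cdot>\<^sub>v y k)
          + 1 / 2 * ((x (Suc k) j - x k j) \<bullet> (P j *\<^sub>v (x (Suc k) j - x k j)))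
        \<le> \<theta> j z
          + \<rho> / 2 * sqn (A j *\<^sub>v z + vsum l (\<lambda>i. A i *\<^sub>v x k i) ({1..m} - {j})
                         - b - (1 / \<rho>) \<cdot>\<^sub>v y k)
          + 1 / 2 * ((z - x k j) \<bullet> (P j *\<^sub>v (z - x k j)))"
    and step_m_mem: "\<And>k. x (Suc k) m \<in> X m"
    and step_m_min: "\<And>k z. z \<in> X m \<Longrightarrow>
        \<theta> m (x (Suc k) m)
          + \<rho> / 2 * sqn (\<gamma> \<cdot>\<^sub>v vsum l (\<lambda>i. A i *\<^sub>v x (Suc k) i) {1..m-1}
                         + (1 - \<gamma>) \<cdot>\<^sub>v (b - A m *\<^sub>v x k m)
                         + A m *\<^sub>v x (Suc k) m - b - (1 / \<rho>) \<cdot>\<^sub>v y k)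
          + 1 / 2 * ((x (Suc k) m - x k m) \<bullet> (P m *\<^sub>v (x (Suc k) m - x k m)))
        \<le> \<theta> m z
          + \<rho> / 2 * sqn (\<gamma> \<cdot>\<^sub>v vsum l (\<lambda>i. A i *\<^sub>v x (Suc k) i) {1..m-1}
                         + (1 - \<gamma>) \<cdot>\<^sub>v (b - A m *\<^sub>v x k m)
                         + A m *\<^sub>v z - b - (1 / \<rho>) \<cdot>\<^sub>v y k)
          + 1 / 2 * ((z - x k m) \<bullet> (P m *\<^sub>v (z - x k m)))"
    and step_y: "\<And>k. y (Suc k) = y k - \<rho> \<cdot>\<^sub>v (\<gamma> \<cdot>\<^sub>v vsum l (\<lambda>i. A i *\<^sub>v x (Suc k) i) {1..m-1}
                         + (1 - \<gamma>) \<cdot>\<^sub>v (b - A m *\<^sub>v x k m) + A m *\<^sub>v x (Suc k) m - b)"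
    and ybar_def: "\<And>k. ybar k = y k - \<rho> \<cdot>\<^sub>v (vsum l (\<lambda>i. A i *\<^sub>v x (Suc k) i) {1..m-1}
                         + A m *\<^sub>v x k m - b)"
  shows "\<forall>k. Qform m A P \<rho> \<gamma>
            (wminus (x (Suc k), ybar k) (x (Suc (Suc k)), ybar (Suc k)))
            (wminus (wminus (x k, y k) (x (Suc k), y (Suc k)))
                    (wminus (x (Suc k), ybar k) (x (Suc (Suc k)), ybar (Suc k)))) \<ge> 0"
proof
  fix k
  have Ac: "\<And>i. i \<in> {1..m} \<Longrightarrow> A i \<in> carrier_mat l (n i)"
    using A_rank by (auto simp: full_col_rank_def)
  have Pc: "\<And>i. i \<in> {1..m} \<Longrightarrow> P i \<in> carrier_mat (n i) (n i)"
    using P_pd by (auto simp: sym_pd_def)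
  have Xsub: "\<And>i. i \<in> {1..m} \<Longrightarrow> X i \<subseteq> carrier_vec (n i)"
    using X_convex by (auto simp: convex_vset_def)
  have xX: "\<And>t i. i \<in> {1..m} \<Longrightarrow> x t i \<in> X i"
  proof -
    fix t i assume i: "i \<in> {1..m}"
    show "x t i \<in> X i"
    proof (cases t)
      case 0 thus ?thesis using init i by (simp add: inW_def)
    next
      case (Suc t')
      show ?thesis
      proof (cases "i = m")
        case True thus ?thesis using Suc step_m_mem by simp
      next
        case False hence "i \<in> {1..m-1}" using i by auto
        thus ?thesis using Suc step_j_mem by simp
      qed
    qed
  qed
  have xc: "\<And>t i. i \<in> {1..m} \<Longrightarrow> x t i \<in> carrier_vec (n i)"
    using xX Xsub by blast
  have m1: "m \<in> {1..m}" using m2 by auto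
  have yc: "\<And>t. y t \<in> carrier_vec l"
  proof -
    fix t show "y t \<in> carrier_vec l"
    proof (induction t)
      case 0 thus ?case using init by (simp add: inW_def)
    next
      case (Suc t)
      have "A m *\<^sub>v x t m \<in> carrier_vec l" "A m *\<^sub>v x (Suc t) m \<in> carrier_vec l"
        using Ac[OF m1] xc[OF m1] by auto
      thus ?case using Suc b_dim by (simp add: step_y)
    qed
  qed
  define cj where "cj = (\<lambda>j t. vsum l (\<lambda>i. A i *\<^sub>v x t i) ({1..m}-{j}) - b - (1/\<rho>) \<cdot>\<^sub>v y t)"
  define cm where "cm = (\<lambda>t. \<gamma> \<cdot>\<^sub>v vsum l (\<lambda>i. A i *\<^sub>v x (Suc t) i) {1..m-1}
                         + (1 - \<gamma>) \<cdot>\<^sub>v (b - A m *\<^sub>v x t m) - b - (1/\<rho>) \<cdot>\<^sub>v y t)"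
  have cjc: "\<And>j t. cj j t \<in> carrier_vec l" using b_dim yc by (simp add: cj_def)
  have cmc: "\<And>t. cm t \<in> carrier_vec l" using b_dim yc Ac[OF m1] xc[OF m1] by (simp add: cm_def)
  have focj: "0 \<le> \<theta> j z - \<theta> j (x (Suc t) j)
     + \<rho> * ((A j *\<^sub>v z - A j *\<^sub>v x (Suc t) j) \<bullet> (A j *\<^sub>v x (Suc t) j + cj j t))
     + (z - x (Suc t) j) \<bullet> (P j *\<^sub>v (x (Suc t) j - x t j))"
    if jI: "j \<in> {1..m-1}" and z: "z \<in> X j" for t j z
  proof -
    have jm: "j \<in> {1..m}" using jI by auto
    have rj: "\<And>w. w \<in> carrier_vec (n j) \<Longrightarrow> A j *\<^sub>v w + vsum l (\<lambda>i. A i *\<^sub>v x t i) ({1..m} - {j})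
                         - b - (1 / \<rho>) \<cdot>\<^sub>v y t = A j *\<^sub>v w + cj j t"
      unfolding cj_def using Ac[OF jm] b_dim yc by (intro reassoc) auto
    show ?thesis
    proof (rule foc[where S = "X j" and d = "n j" and l = l])
      show "convex_vfun (n j) (\<theta> j)" using conv_theta jm by auto
      show "convex_vset (n j) (X j)" using X_convex jm by auto
      show "x (Suc t) j \<in> X j" using xX jm by auto
      show "z \<in> X j" by fact
      show "A j \<in> carrier_mat l (n j)" using Ac jm by auto
      show "cj j t \<in> carrier_vec l" by (rule cjc)
      show "x t j \<in> carrier_vec (n j)" using xc jm by auto
      show "sym_pd (n j) (P j)" using P_pd jm by auto
      show "\<rho> > 0" by fact
      fix z' assume z': "z' \<in> X j"
      have "z' \<in> carrier_vec (n j)" "x (Suc t) j \<in> carrier_vec (n j)" using z' Xsub jm xc by auto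
      thus "\<theta> j (x (Suc t) j) + \<rho> / 2 * sqn (A j *\<^sub>v x (Suc t) j + cj j t) +
          1 / 2 * ((x (Suc t) j - x t j) \<bullet> (P j *\<^sub>v (x (Suc t) j - x t j)))
          \<le> \<theta> j z' + \<rho> / 2 * sqn (A j *\<^sub>v z' + cj j t) + 1 / 2 * ((z' - x t j) \<bullet> (P j *\<^sub>v (z' - x t j)))"
        using step_j_min[OF jI z', of t] by (simp only: rj)
    qed
  qed
  have focm: "0 \<le> \<theta> m z - \<theta> m (x (Suc t) m)
     + \<rho> * ((A m *\<^sub>v z - A m *\<^sub>v x (Suc t) m) \<bullet> (A m *\<^sub>v x (Suc t) m + cm t))
     + (z - x (Suc t) m) \<bullet> (P m *\<^sub>v (x (Suc t) m - x t m))"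
    if z: "z \<in> X m" for t z
  proof -
    have rj: "\<And>w. w \<in> carrier_vec (n m) \<Longrightarrow> \<gamma> \<cdot>\<^sub>v vsum l (\<lambda>i. A i *\<^sub>v x (Suc t) i) {1..m-1}
                         + (1 - \<gamma>) \<cdot>\<^sub>v (b - A m *\<^sub>v x t m)
                         + A m *\<^sub>v w - b - (1 / \<rho>) \<cdot>\<^sub>v y t = A m *\<^sub>v w + cm t"
      unfolding cm_def using Ac[OF m1] b_dim yc xc[OF m1] by (intro reassoc2) auto
    show ?thesis
    proof (rule foc[where S = "X m" and d = "n m" and l = l])
      show "convex_vfun (n m) (\<theta> m)" using conv_theta m1 by auto
      show "convex_vset (n m) (X m)" using X_convex m1 by auto
      show "x (Suc t) m \<in> X m" using xX m1 by auto
      show "z \<in> X m" by fact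
      show "A m \<in> carrier_mat l (n m)" using Ac m1 by auto
      show "cm t \<in> carrier_vec l" by (rule cmc)
      show "x t m \<in> carrier_vec (n m)" using xc m1 by auto
      show "sym_pd (n m) (P m)" using P_pd m1 by auto
      show "\<rho> > 0" by fact
      fix z' assume z': "z' \<in> X m"
      have "z' \<in> carrier_vec (n m)" "x (Suc t) m \<in> carrier_vec (n m)" using z' Xsub m1 xc by auto
      thus "\<theta> m (x (Suc t) m) + \<rho> / 2 * sqn (A m *\<^sub>v x (Suc t) m + cm t) +
          1 / 2 * ((x (Suc t) m - x t m) \<bullet> (P m *\<^sub>v (x (Suc t) m - x t m)))
          \<le> \<theta> m z' + \<rho> / 2 * sqn (A m *\<^sub>v z' + cm t) + 1 / 2 * ((z' - x t m) \<bullet> (P m *\<^sub>v (z' - x t m)))"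
        using step_m_min[OF z', of t] by (simp only: rj)
    qed
  qed
  show "Qform m A P \<rho> \<gamma>
            (wminus (x (Suc k), ybar k) (x (Suc (Suc k)), ybar (Suc k)))
            (wminus (wminus (x k, y k) (x (Suc k), y (Suc k)))
                    (wminus (x (Suc k), ybar k) (x (Suc (Suc k)), ybar (Suc k)))) \<ge> 0"
  proof -
  define vj where "vj = (\<lambda>i. x (Suc k) i - x (Suc (Suc k)) i)"
  define gj where "gj = (\<lambda>i. (x k i - x (Suc k) i) - (x (Suc k) i - x (Suc (Suc k)) i))"
  define dy where "dy = ybar k - ybar (Suc k)"
  define gy where "gy = (y k - y (Suc k)) - (ybar k - ybar (Suc k))"
  have pdim: "\<And>t i. i \<in> {1..m} \<Longrightarrow> dim_vec (A i *\<^sub>v x t i) = l"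
    using Ac by auto
  have Agj: "\<And>i. i \<in> {1..m} \<Longrightarrow> A i *\<^sub>v gj i = (A i *\<^sub>v x k i - A i *\<^sub>v x (Suc k) i) - (A i *\<^sub>v x (Suc k) i - A i *\<^sub>v x (Suc (Suc k)) i)"
  proof -
    fix i assume i: "i \<in> {1..m}"
    note c = xc[OF i, of k] xc[OF i, of "Suc k"] xc[OF i, of "Suc (Suc k)"]
    show "?thesis i" unfolding gj_def
      using c by (simp add: mult_minus_distrib_mat_vec[OF Ac[OF i]])
  qed
  have Avj: "\<And>i. i \<in> {1..m} \<Longrightarrow> A i *\<^sub>v vj i = A i *\<^sub>v x (Suc k) i - A i *\<^sub>v x (Suc (Suc k)) i"
  proof -
    fix i assume i: "i \<in> {1..m}"
    note c = xc[OF i, of k] xc[OF i, of "Suc k"] xc[OF i, of "Suc (Suc k)"]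
    show "?thesis i" unfolding vj_def
      using c by (simp add: mult_minus_distrib_mat_vec[OF Ac[OF i]])
  qed
  have IdJ: "\<rho> \<cdot>\<^sub>v ((A j *\<^sub>v x (Suc (Suc k)) j + cj j (Suc k)) - (A j *\<^sub>v x (Suc k) j + cj j k))
      = dy - \<rho> \<cdot>\<^sub>v vsum l (\<lambda>i. A i *\<^sub>v gj i) ({1..m-1}-{j})" if jI: "j \<in> {1..m-1}" for j
  proof -
    have jm: "j \<in> {1..m}" using jI by auto
    have "vsum l (\<lambda>i. A i *\<^sub>v gj i) ({1..m-1}-{j}) = vsum l (\<lambda>i. (A i *\<^sub>v x k i - A i *\<^sub>v x (Suc k) i) - (A i *\<^sub>v x (Suc k) i - A i *\<^sub>v x (Suc (Suc k)) i)) ({1..m-1}-{j})"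
      by (rule vsum_cong) (use Agj in auto)
    hence e: "vsum l (\<lambda>i. A i *\<^sub>v gj i) ({1..m-1}-{j}) = \<dots>" .
    show ?thesis unfolding e
    proof (intro eq_vecI)
      fix r assume "r < dim_vec (dy - \<rho> \<cdot>\<^sub>v vsum l (\<lambda>i. A i *\<^sub>v x k i - A i *\<^sub>v x (Suc k) i - (A i *\<^sub>v x (Suc k) i - A i *\<^sub>v x (Suc (Suc k)) i)) ({1..m - 1} - {j}))"
      hence r: "r < l" by simp
      define a where "a = (\<lambda>t i. (A i *\<^sub>v x t i) $ r)"
      have dm: "\<And>t. dim_vec (A m *\<^sub>v x t m) = l" "\<And>t. dim_vec (y t) = l" "dim_vec b = l"
        using pdim m1 yc b_dim by auto
      have ya: "\<And>t. ybar t $ r = y t $ r - \<rho> * ((\<Sum>i\<in>{1..m-1}. a (Suc t) i) + a t m - b $ r)"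
        using r dm by (simp add: ybar_def a_def)
      have ca: "\<And>t. cj j t $ r = (\<Sum>i\<in>{1..m}-{j}. a t i) - b $ r - (1/\<rho>) * y t $ r"
        using r dm by (simp add: cj_def a_def)
      have sa: "vsum l (\<lambda>i. A i *\<^sub>v x k i - A i *\<^sub>v x (Suc k) i - (A i *\<^sub>v x (Suc k) i - A i *\<^sub>v x (Suc (Suc k)) i)) ({1..m - 1} - {j}) $ r
         = (\<Sum>i\<in>{1..m-1}-{j}. (a k i - a (Suc k) i) - (a (Suc k) i - a (Suc (Suc k)) i))"
      proof (simp only: vsum_index[OF r], intro sum.cong refl)
        fix i assume "i \<in> {1..m-1}-{j}"
        hence i: "i \<in> {1..m}" by auto
        show "(A i *\<^sub>v x k i - A i *\<^sub>v x (Suc k) i - (A i *\<^sub>v x (Suc k) i - A i *\<^sub>v x (Suc (Suc k)) i)) $ r = (a k i - a (Suc k) i) - (a (Suc k) i - a (Suc (Suc k)) i)"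
          using r pdim[OF i] by (simp add: a_def)
      qed
      have dA: "dim_vec (A j *\<^sub>v x t j) = l" for t using pdim jm by auto
      have lhs: "(\<rho> \<cdot>\<^sub>v ((A j *\<^sub>v x (Suc (Suc k)) j + cj j (Suc k)) - (A j *\<^sub>v x (Suc k) j + cj j k))) $ r
          = \<rho> * ((a (Suc (Suc k)) j + cj j (Suc k) $ r) - (a (Suc k) j + cj j k $ r))"
        using r cjc[of j k] cjc[of j "Suc k"] by (simp add: a_def)
      have rhs: "(dy - \<rho> \<cdot>\<^sub>v vsum l (\<lambda>i. A i *\<^sub>v x k i - A i *\<^sub>v x (Suc k) i - (A i *\<^sub>v x (Suc k) i - A i *\<^sub>v x (Suc (Suc k)) i)) ({1..m - 1} - {j})) $ r
         = (ybar k $ r - ybar (Suc k) $ r) - \<rho> * (\<Sum>i\<in>{1..m-1}-{j}. (a k i - a (Suc k) i) - (a (Suc k) i - a (Suc (Suc k)) i))"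
        using r dm unfolding sa[symmetric] by (simp add: dy_def ybar_def)
      have s1: "\<And>t. (\<Sum>i\<in>{1..m}-{j}. a t i) = (\<Sum>i\<in>{1..m-1}-{j}. a t i) + a t m"
        using split1[OF jI m2] .
      have s2: "\<And>t. (\<Sum>i\<in>{1..m-1}. a t i) = a t j + (\<Sum>i\<in>{1..m-1}-{j}. a t i)"
        using split2[OF jI] .
      have s3: "(\<Sum>i\<in>{1..m-1}-{j}. (a k i - a (Suc k) i) - (a (Suc k) i - a (Suc (Suc k)) i))
         = (\<Sum>i\<in>{1..m-1}-{j}. a k i) - 2 * (\<Sum>i\<in>{1..m-1}-{j}. a (Suc k) i) + (\<Sum>i\<in>{1..m-1}-{j}. a (Suc (Suc k)) i)"
        by (simp add: sum_subtractf sum.distrib sum_distrib_left[symmetric] algebra_simps)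
      show "(\<rho> \<cdot>\<^sub>v ((A j *\<^sub>v x (Suc (Suc k)) j + cj j (Suc k)) - (A j *\<^sub>v x (Suc k) j + cj j k))) $ r = (dy - \<rho> \<cdot>\<^sub>v vsum l (\<lambda>i. A i *\<^sub>v x k i - A i *\<^sub>v x (Suc k) i - (A i *\<^sub>v x (Suc k) i - A i *\<^sub>v x (Suc (Suc k)) i)) ({1..m - 1} - {j})) $ r"
        unfolding lhs rhs ca ya s1 s2 s3 using rho_pos by (simp add: field_simps)
    next
      have "dim_vec (y k) = l" "dim_vec (y (Suc k)) = l" "dim_vec b = l" using yc b_dim by auto
      thus "dim_vec (\<rho> \<cdot>\<^sub>v ((A j *\<^sub>v x (Suc (Suc k)) j + cj j (Suc k)) - (A j *\<^sub>v x (Suc k) j + cj j k))) = dim_vec (dy - \<rho> \<cdot>\<^sub>v vsum l (\<lambda>i. A i *\<^sub>v x k i - A i *\<^sub>v x (Suc k) i - (A i *\<^sub>v x (Suc k) i - A i *\<^sub>v x (Suc (Suc k)) i)) ({1..m - 1} - {j}))"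
        by (simp add: cj_def)
    qed
  qed
  have dm: "\<And>t. dim_vec (A m *\<^sub>v x t m) = l" "\<And>t. dim_vec (y t) = l" "dim_vec b = l"
    using pdim m1 yc b_dim by auto
  have IdM: "\<rho> \<cdot>\<^sub>v ((A m *\<^sub>v x (Suc (Suc k)) m + cm (Suc k)) - (A m *\<^sub>v x (Suc k) m + cm k))
      = \<rho> \<cdot>\<^sub>v (A m *\<^sub>v gj m) + (1 - \<gamma>) \<cdot>\<^sub>v gy + dy"
  proof (intro eq_vecI)
    fix r assume "r < dim_vec (\<rho> \<cdot>\<^sub>v (A m *\<^sub>v gj m) + (1 - \<gamma>) \<cdot>\<^sub>v gy + dy)"
    hence r: "r < l" using dm by (simp add: dy_def ybar_def)
    define a where "a = (\<lambda>t i. (A i *\<^sub>v x t i) $ r)"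
    have ya: "\<And>t. ybar t $ r = y t $ r - \<rho> * ((\<Sum>i\<in>{1..m-1}. a (Suc t) i) + a t m - b $ r)"
      using r dm by (simp add: ybar_def a_def)
    have ca: "\<And>t. cm t $ r = \<gamma> * (\<Sum>i\<in>{1..m-1}. a (Suc t) i) + (1 - \<gamma>) * (b $ r - a t m) - b $ r - (1/\<rho>) * y t $ r"
      using r dm by (simp add: cm_def a_def)
    have lhs: "(\<rho> \<cdot>\<^sub>v ((A m *\<^sub>v x (Suc (Suc k)) m + cm (Suc k)) - (A m *\<^sub>v x (Suc k) m + cm k))) $ r
          = \<rho> * ((a (Suc (Suc k)) m + cm (Suc k) $ r) - (a (Suc k) m + cm k $ r))"
      using r cmc[of k] cmc[of "Suc k"] by (simp add: a_def)
    have rhs: "(\<rho> \<cdot>\<^sub>v (A m *\<^sub>v gj m) + (1 - \<gamma>) \<cdot>\<^sub>v gy + dy) $ r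
       = \<rho> * ((a k m - a (Suc k) m) - (a (Suc k) m - a (Suc (Suc k)) m))
         + (1 - \<gamma>) * ((y k $ r - y (Suc k) $ r) - (ybar k $ r - ybar (Suc k) $ r)) + (ybar k $ r - ybar (Suc k) $ r)"
      using r dm unfolding Agj[OF m1] by (simp add: dy_def gy_def ybar_def a_def)
    show "(\<rho> \<cdot>\<^sub>v ((A m *\<^sub>v x (Suc (Suc k)) m + cm (Suc k)) - (A m *\<^sub>v x (Suc k) m + cm k))) $ r = (\<rho> \<cdot>\<^sub>v (A m *\<^sub>v gj m) + (1 - \<gamma>) \<cdot>\<^sub>v gy + dy) $ r"
      unfolding lhs rhs ca ya using rho_pos by (simp add: field_simps)
  qed (use dm in \<open>simp add: dy_def ybar_def cm_def\<close>)
  have IdG: "gy = \<rho> \<cdot>\<^sub>v (vsum l (\<lambda>i. A i *\<^sub>v vj i) {1..m-1} + A m *\<^sub>v (x k m - x (Suc k) m))"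
  proof (intro eq_vecI)
    fix r assume "r < dim_vec (\<rho> \<cdot>\<^sub>v (vsum l (\<lambda>i. A i *\<^sub>v vj i) {1..m-1} + A m *\<^sub>v (x k m - x (Suc k) m)))"
    hence r: "r < l" using Ac[OF m1] by simp
    define a where "a = (\<lambda>t i. (A i *\<^sub>v x t i) $ r)"
    have ya: "\<And>t. ybar t $ r = y t $ r - \<rho> * ((\<Sum>i\<in>{1..m-1}. a (Suc t) i) + a t m - b $ r)"
      using r dm by (simp add: ybar_def a_def)
    have sa: "vsum l (\<lambda>i. A i *\<^sub>v vj i) {1..m-1} $ r = (\<Sum>i\<in>{1..m-1}. a (Suc k) i - a (Suc (Suc k)) i)"
    proof (simp only: vsum_index[OF r], intro sum.cong refl)
      fix i assume "i \<in> {1..m-1}"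
      hence i: "i \<in> {1..m}" by auto
      show "(A i *\<^sub>v vj i) $ r = a (Suc k) i - a (Suc (Suc k)) i"
        using r pdim[OF i] unfolding Avj[OF i] by (simp add: a_def)
    qed
    have e: "A m *\<^sub>v (x k m - x (Suc k) m) = A m *\<^sub>v x k m - A m *\<^sub>v x (Suc k) m"
      using xc[OF m1] by (simp add: mult_minus_distrib_mat_vec[OF Ac[OF m1]])
    have rhs: "(\<rho> \<cdot>\<^sub>v (vsum l (\<lambda>i. A i *\<^sub>v vj i) {1..m-1} + A m *\<^sub>v (x k m - x (Suc k) m))) $ r
       = \<rho> * ((\<Sum>i\<in>{1..m-1}. a (Suc k) i - a (Suc (Suc k)) i) + (a k m - a (Suc k) m))"
      using r dm unfolding e sa[symmetric] by (simp add: a_def)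
    have lhs: "gy $ r = (y k $ r - y (Suc k) $ r) - (ybar k $ r - ybar (Suc k) $ r)"
      using r dm by (simp add: gy_def ybar_def)
    show "gy $ r = (\<rho> \<cdot>\<^sub>v (vsum l (\<lambda>i. A i *\<^sub>v vj i) {1..m-1} + A m *\<^sub>v (x k m - x (Suc k) m))) $ r"
      unfolding lhs rhs ya by (simp add: sum_subtractf algebra_simps)
  qed (use dm Ac[OF m1] in \<open>simp add: gy_def ybar_def\<close>)
  define I where "I = {1..m-1}"
  have Im: "\<And>j. j \<in> I \<Longrightarrow> j \<in> {1..m}" unfolding I_def by auto
  have vjc: "\<And>i. i \<in> {1..m} \<Longrightarrow> vj i \<in> carrier_vec (n i)" using xc by (simp add: vj_def)
  have gjc: "\<And>i. i \<in> {1..m} \<Longrightarrow> gj i \<in> carrier_vec (n i)" using xc by (simp add: gj_def)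
  have avc: "\<And>i. i \<in> {1..m} \<Longrightarrow> A i *\<^sub>v vj i \<in> carrier_vec l" using vjc Ac by (meson mult_mat_vec_carrier)
  have agc: "\<And>i. i \<in> {1..m} \<Longrightarrow> A i *\<^sub>v gj i \<in> carrier_vec l" using gjc Ac by (meson mult_mat_vec_carrier)
  have amc: "\<And>t. A m *\<^sub>v x t m \<in> carrier_vec l" using Ac[OF m1] xc[OF m1] by auto
  have dyc: "dy \<in> carrier_vec l" using yc b_dim amc by (simp add: dy_def ybar_def)
  have gyc: "gy \<in> carrier_vec l" using yc b_dim amc by (simp add: gy_def ybar_def)
  have Lj: "0 \<le> (A j *\<^sub>v vj j) \<bullet> dy - \<rho> * (\<Sum>i\<in>I-{j}. (A j *\<^sub>v vj j) \<bullet> (A i *\<^sub>v gj i)) + vj j \<bullet> (P j *\<^sub>v gj j)"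
    if jI: "j \<in> I" for j
  proof -
    have jI': "j \<in> {1..m-1}" using jI by (simp add: I_def)
    have jm: "j \<in> {1..m}" using Im jI by auto
    have XX: "x (Suc (Suc k)) j \<in> X j" "x (Suc k) j \<in> X j" using xX jm by auto
    have c: "0 \<le> \<rho> * ((A j *\<^sub>v vj j) \<bullet> ((A j *\<^sub>v x (Suc (Suc k)) j + cj j (Suc k)) - (A j *\<^sub>v x (Suc k) j + cj j k))) + vj j \<bullet> (P j *\<^sub>v gj j)"
      unfolding vj_def gj_def
      by (rule combine[OF Ac[OF jm] Pc[OF jm] xc[OF jm] xc[OF jm] xc[OF jm] cjc cjc focj[OF jI' XX(1), of k] focj[OF jI' XX(2), of "Suc k"]])
    have Dc: "(A j *\<^sub>v x (Suc (Suc k)) j + cj j (Suc k)) - (A j *\<^sub>v x (Suc k) j + cj j k) \<in> carrier_vec l"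
      using Ac[OF jm] xc[OF jm] cjc by auto
    have "\<rho> * ((A j *\<^sub>v vj j) \<bullet> ((A j *\<^sub>v x (Suc (Suc k)) j + cj j (Suc k)) - (A j *\<^sub>v x (Suc k) j + cj j k)))
        = (A j *\<^sub>v vj j) \<bullet> (\<rho> \<cdot>\<^sub>v ((A j *\<^sub>v x (Suc (Suc k)) j + cj j (Suc k)) - (A j *\<^sub>v x (Suc k) j + cj j k)))"
      using avc[OF jm] Dc by simp
    also have "\<dots> = (A j *\<^sub>v vj j) \<bullet> (dy - \<rho> \<cdot>\<^sub>v vsum l (\<lambda>i. A i *\<^sub>v gj i) ({1..m-1}-{j}))"
      unfolding IdJ[OF jI'] ..
    also have "\<dots> = (A j *\<^sub>v vj j) \<bullet> dy - \<rho> * ((A j *\<^sub>v vj j) \<bullet> vsum l (\<lambda>i. A i *\<^sub>v gj i) ({1..m-1}-{j}))"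
      using avc[OF jm] dyc by (simp add: scalar_prod_minus_distrib[of _ l])
    also have "(A j *\<^sub>v vj j) \<bullet> vsum l (\<lambda>i. A i *\<^sub>v gj i) ({1..m-1}-{j}) = (\<Sum>i\<in>I-{j}. (A j *\<^sub>v vj j) \<bullet> (A i *\<^sub>v gj i))"
      unfolding I_def by (rule scalar_vsum[OF avc[OF jm]]) (use agc in auto)
    finally show ?thesis using c by simp
  qed
  have Lm: "0 \<le> \<rho> * ((A m *\<^sub>v vj m) \<bullet> (A m *\<^sub>v gj m)) + (1 - \<gamma>) * ((A m *\<^sub>v vj m) \<bullet> gy) + (A m *\<^sub>v vj m) \<bullet> dy + vj m \<bullet> (P m *\<^sub>v gj m)"
  proof -
    have XX: "x (Suc (Suc k)) m \<in> X m" "x (Suc k) m \<in> X m" using xX m1 by auto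
    have c: "0 \<le> \<rho> * ((A m *\<^sub>v vj m) \<bullet> ((A m *\<^sub>v x (Suc (Suc k)) m + cm (Suc k)) - (A m *\<^sub>v x (Suc k) m + cm k))) + vj m \<bullet> (P m *\<^sub>v gj m)"
      unfolding vj_def gj_def
      by (rule combine[OF Ac[OF m1] Pc[OF m1] xc[OF m1] xc[OF m1] xc[OF m1] cmc cmc focm[OF XX(1), of k] focm[OF XX(2), of "Suc k"]])
    have Dc: "(A m *\<^sub>v x (Suc (Suc k)) m + cm (Suc k)) - (A m *\<^sub>v x (Suc k) m + cm k) \<in> carrier_vec l"
      using Ac[OF m1] xc[OF m1] cmc by auto
    have "\<rho> * ((A m *\<^sub>v vj m) \<bullet> ((A m *\<^sub>v x (Suc (Suc k)) m + cm (Suc k)) - (A m *\<^sub>v x (Suc k) m + cm k)))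
        = (A m *\<^sub>v vj m) \<bullet> (\<rho> \<cdot>\<^sub>v ((A m *\<^sub>v x (Suc (Suc k)) m + cm (Suc k)) - (A m *\<^sub>v x (Suc k) m + cm k)))"
      using avc[OF m1] Dc by simp
    also have "\<dots> = (A m *\<^sub>v vj m) \<bullet> (\<rho> \<cdot>\<^sub>v (A m *\<^sub>v gj m) + (1 - \<gamma>) \<cdot>\<^sub>v gy + dy)"
      unfolding IdM ..
    also have "\<dots> = \<rho> * ((A m *\<^sub>v vj m) \<bullet> (A m *\<^sub>v gj m)) + (1 - \<gamma>) * ((A m *\<^sub>v vj m) \<bullet> gy) + (A m *\<^sub>v vj m) \<bullet> dy"
      using avc[OF m1] agc[OF m1] gyc dyc by (simp add: scalar_prod_add_distrib[of _ l])
    finally show ?thesis using c by simp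
  qed
  have W1: "wminus (x (Suc k), ybar k) (x (Suc (Suc k)), ybar (Suc k)) = (vj, dy)"
    by (simp add: wminus_def vj_def dy_def)
  have W2: "wminus (wminus (x k, y k) (x (Suc k), y (Suc k))) (vj, dy) = (gj, gy)"
    by (simp add: wminus_def gj_def gy_def dy_def vj_def)
  define a where "a = (\<lambda>i. A i *\<^sub>v vj i)"
  define H where "H = (\<Sum>j\<in>I. \<Sum>i\<in>I-{j}. a j \<bullet> (A i *\<^sub>v gj i))"
  have G1: "G1form m A P \<rho> vj gj = (\<Sum>i\<in>I. vj i \<bullet> (P i *\<^sub>v gj i)) - \<rho> * H"
    unfolding G1form_def H_def I_def a_def by (simp add: sum_if_diff)
  have Q: "Qform m A P \<rho> \<gamma> (vj, dy) (gj, gy) = G1form m A P \<rho> vj gj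
       + \<rho> * (a m \<bullet> (A m *\<^sub>v gj m)) + vj m \<bullet> (P m *\<^sub>v gj m)
       + (1 - \<gamma>) * (a m \<bullet> gy) - dy \<bullet> (A m *\<^sub>v gj m) + (1 / \<rho>) * (dy \<bullet> gy)"
    by (simp add: Qform_def Let_def a_def)
  have sumL: "0 \<le> (\<Sum>j\<in>I. a j \<bullet> dy) - \<rho> * H + (\<Sum>j\<in>I. vj j \<bullet> (P j *\<^sub>v gj j))"
  proof -
    have "0 \<le> (\<Sum>j\<in>I. (A j *\<^sub>v vj j) \<bullet> dy - \<rho> * (\<Sum>i\<in>I-{j}. (A j *\<^sub>v vj j) \<bullet> (A i *\<^sub>v gj i)) + vj j \<bullet> (P j *\<^sub>v gj j))"
      by (rule sum_nonneg) (rule Lj)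
    thus ?thesis unfolding H_def a_def by (simp add: sum.distrib sum_subtractf sum_distrib_left)
  qed
  have Lm': "0 \<le> \<rho> * (a m \<bullet> (A m *\<^sub>v gj m)) + (1 - \<gamma>) * (a m \<bullet> gy) + a m \<bullet> dy + vj m \<bullet> (P m *\<^sub>v gj m)"
    using Lm by (simp add: a_def)
  have uc: "A m *\<^sub>v (x k m - x (Suc k) m) \<in> carrier_vec l" using Ac[OF m1] xc[OF m1] by auto
  have E3: "dy \<bullet> (A m *\<^sub>v gj m) = dy \<bullet> (A m *\<^sub>v (x k m - x (Suc k) m)) - dy \<bullet> a m"
  proof -
    have "gj m = (x k m - x (Suc k) m) - vj m" by (simp add: gj_def vj_def)
    hence "A m *\<^sub>v gj m = A m *\<^sub>v (x k m - x (Suc k) m) - a m"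
      unfolding a_def using xc[OF m1] vjc[OF m1] by (simp add: mult_minus_distrib_mat_vec[OF Ac[OF m1]])
    thus ?thesis using dyc uc avc[OF m1] by (simp add: a_def scalar_prod_minus_distrib[of _ l])
  qed
  have E4: "(1 / \<rho>) * (dy \<bullet> gy) = (\<Sum>j\<in>I. dy \<bullet> a j) + dy \<bullet> (A m *\<^sub>v (x k m - x (Suc k) m))"
  proof -
    have vc: "vsum l (\<lambda>i. A i *\<^sub>v vj i) {1..m-1} \<in> carrier_vec l" by simp
    have "dy \<bullet> gy = \<rho> * (dy \<bullet> vsum l (\<lambda>i. A i *\<^sub>v vj i) {1..m-1} + dy \<bullet> (A m *\<^sub>v (x k m - x (Suc k) m)))"
      unfolding IdG using dyc vc uc by (simp add: scalar_prod_add_distrib[of _ l])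
    moreover have "dy \<bullet> vsum l (\<lambda>i. A i *\<^sub>v vj i) {1..m-1} = (\<Sum>j\<in>I. dy \<bullet> a j)"
      unfolding I_def a_def by (rule scalar_vsum[OF dyc]) (use avc in auto)
    ultimately show ?thesis using rho_pos by simp
  qed
  have E5: "\<And>j. j \<in> {1..m} \<Longrightarrow> dy \<bullet> a j = a j \<bullet> dy"
    unfolding a_def using dyc avc by (meson comm_scalar_prod)
  have E5s: "(\<Sum>j\<in>I. dy \<bullet> a j) = (\<Sum>j\<in>I. a j \<bullet> dy)"
    using E5 Im by (intro sum.cong) auto
  show ?thesis unfolding W1 W2 Q G1 E3 E4 E5s
    using sumL Lm' E5[OF m1] by (simp add: algebra_simps)
  qed
qed

end
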